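(* Let $0\le \rho_m\le\rho_M\le\rho_{\max}$ and let $g,v,w_\eta$ satisfy the standing assumptions (A) below. Let $h>0$, $N\in\mathbb{N}$ with $Nh=\eta$, and let a quadrature rule with nodes $y_1,\dots,y_R\in[0,1]$, $y_R=1$, and weights $\gamma_1,\dots,\gamma_R>0$, $\sum_{\nu=1}^R\gamma_\nu=1$, be given, such that $$h\sum_{k=0}^{N-1}\sum_{\nu=1}^{R}\gamma_\nu\, w_\eta^{\nu,k}=1,\qquad w_\eta^{\nu,k}:=w_\eta\big((k+y_\nu)h\big).$$ Suppose that at time $t^n$ we are given cell averages $\bar\rho_j^n\in[\rho_m,\rho_M]$ ($j\in\mathbb{Z}$) and, for every $l\in\mathbb{Z}$, a polynomial $P_l$ on $I_l=[x_{l-1/2},x_{l+1/2}]$ (with $x_{l+1/2}-x_{l-1/2}=h$) such that $\frac1h\int_{I_l}P_l(x)\,dx=\bar\rho_l^n$, the quadrature rule is exact for $P_l$, i.e. $\frac1h\int_{I_l}P_l\,dx=\sum_{\nu}\gamma_\nu P_l(x_{l-1/2}+y_\nu h)$, and all reconstructed values $\rho_l^\nu:=P_l(x_{l-1/2}+y_\nu h)$ lie in $[\rho_m,\rho_M]$. Define $\rho^-_{j+1/2}:=P_j(x_{j+1/2})\,(=\rho_j^R)$, $$V_{j+1/2}:=v\Big(h\sum_{k=0}^{N-1}\sum_{\nu=1}^R\gamma_\nu w_\eta^{\nu,k}\rho^\nu_{j+k+1}\Big),$$ and, for $\tau>0$, the forward Euler update $$\bar\rho_j^{n+1}=\bar\rho_j^n-\frac{\tau}{h}\Big(V_{j+1/2}\,g(\rho^-_{j+1/2})-V_{j-1/2}\,g(\rho^-_{j-1/2})\Big),\quad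 j\in\mathbb{Z}.$$ If $$\tau\le\frac{\gamma_R h}{\gamma_R h\, w_\eta(0)\,\|v'\|\,\|g\|+\|v\|\,\|g'\|},$$ where $\|\cdot\|$ denotes the sup norm on $[0,\rho_{\max}]$, then $\rho_m\le\bar\rho_j^{n+1}\le\rho_M$ for all $j\in\mathbb{Z}$.
   Context: Standing assumptions (A): $\rho_{\max}>0$, $\eta>0$; $g\in C^1([0,\rho_{\max}];\mathbb{R}_{\ge0})$ with $g'\ge0$; $v\in C^1([0,\rho_{\max}];\mathbb{R}_{\ge0})$ with $v'\le0$; $w_\eta\in C^1([0,\eta];\mathbb{R}_{\ge0})$ with $w_\eta'\le0$ and $\int_0^\eta w_\eta(x)\,dx=1$. These arise from the non-local conservation law $\rho_t+(g(\rho)v(\rho*w_\eta))_x=0$ with $(\rho*w_\eta)(t,x)=\int_x^{x+\eta}w_\eta(y-x)\rho(t,y)\,dy$, discretized on a uniform grid $x_j=x_0+jh$, $x_{j\pm1/2}=x_j\pm h/2$. *)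

theory Defs
  imports "HOL-Analysis.Analysis" "HOL-Computational_Algebra.Polynomial"
begin

definition sup_norm_on :: "real set \<Rightarrow> (real \<Rightarrow> real) \<Rightarrow> real" where
  "sup_norm_on S f = (SUP x\<in>S. \<bar>f x\<bar>)"

text \<open>Reconstructed value rho_l^nu = P_l(x_{l-1/2} + y_nu h), with x_j = x0 + j h.\<close>
definition recon :: "(int \<Rightarrow> real poly) \<Rightarrow> real \<Rightarrow> real \<Rightarrow> (nat \<Rightarrow> real) \<Rightarrow> int \<Rightarrow> nat \<Rightarrow> real" where
  "recon P x0 h y l \<nu> = poly (P l) (x0 + real_of_int l * h - h / 2 + y \<nu> * h)"

definition Vface :: "(real \<Rightarrow> real) \<Rightarrow> (real \<Rightarrow> real) \<Rightarrow> (int \<Rightarrow> real poly) \<Rightarrow> real \<Rightarrow> real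
    \<Rightarrow> nat \<Rightarrow> nat \<Rightarrow> (nat \<Rightarrow> real) \<Rightarrow> (nat \<Rightarrow> real) \<Rightarrow> int \<Rightarrow> real" where
  "Vface v w P x0 h N R \<gamma> y j =
     v (h * (\<Sum>k<N. \<Sum>\<nu>=1..R. \<gamma> \<nu> * w ((real k + y \<nu>) * h) * recon P x0 h y (j + int k + 1) \<nu>))"

end

theory Submission imports Defs begin

lemma mono_deriv:
  fixes f f' :: "real \<Rightarrow> real"
  assumes d: "\<And>x. x \<in> {lo..hi} \<Longrightarrow> (f has_real_derivative f' x) (at x within {lo..hi})"
    and nn: "\<And>x. x \<in> {lo..hi} \<Longrightarrow> f' x \<ge> 0"
    and ab: "lo \<le> a" "a \<le> b" "b \<le> hi"
  shows "f a \<le> f b"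
proof (rule DERIV_nonneg_imp_increasing_open[OF ab(2)])
  fix x assume x: "a < x" "x < b"
  then have "at x within {lo..hi} = at x" using ab by (intro at_within_Icc_at) auto
  then show "\<exists>y. (f has_real_derivative y) (at x) \<and> 0 \<le> y"
    using d[of x] nn[of x] x ab by auto
next
  have "continuous_on {lo..hi} f" by (rule DERIV_continuous_on) (rule d)
  then show "continuous_on {a..b} f" by (rule continuous_on_subset) (use ab in auto)
qed

lemma lip_deriv:
  fixes f f' :: "real \<Rightarrow> real"
  assumes d: "\<And>x. x \<in> {lo..hi} \<Longrightarrow> (f has_real_derivative f' x) (at x within {lo..hi})"
    and B: "\<And>x. x \<in> {lo..hi} \<Longrightarrow> \<bar>f' x\<bar> \<le> B"
    and "a \<in> {lo..hi}" "b \<in> {lo..hi}"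
  shows "\<bar>f a - f b\<bar> \<le> B * \<bar>a - b\<bar>"
  using field_differentiable_bound[of "{lo..hi}" f f' B a b] assms by auto

lemma sup_norm_ge:
  fixes f :: "real \<Rightarrow> real"
  assumes "continuous_on {lo..hi} f" "x \<in> {lo..hi}"
  shows "\<bar>f x\<bar> \<le> sup_norm_on {lo..hi} f"
proof -
  have "compact ((\<lambda>x. \<bar>f x\<bar>) ` {lo..hi})"
    by (intro compact_continuous_image continuous_intros assms) auto
  then have "bdd_above ((\<lambda>x. \<bar>f x\<bar>) ` {lo..hi})"
    by (meson bounded_imp_bdd_above compact_imp_bounded)
  then show ?thesis unfolding sup_norm_on_def by (rule cSUP_upper[OF assms(2)])
qed

lemma tele_aux:
  fixes W \<rho> :: "nat \<Rightarrow> real"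
  assumes "\<forall>k<N. 0 \<le> W k" "\<forall>k. Suc k < N \<longrightarrow> W (Suc k) \<le> W k" "\<forall>k. \<rho> k \<le> M"
  shows "1 \<le> n \<Longrightarrow> n \<le> N \<Longrightarrow> (\<Sum>k<n. W k * \<rho> (Suc k)) - (\<Sum>k<n. W k * \<rho> k)
     \<le> W 0 * (M - \<rho> 0) - W (n - 1) * (M - \<rho> n)"
proof (induction n)
  case 0 then show ?case by simp
next
  case (Suc n)
  show ?case
  proof (cases "n = 0")
    case True then show ?thesis by (simp add: algebra_simps)
  next
    case False
    then have IH: "(\<Sum>k<n. W k * \<rho> (Suc k)) - (\<Sum>k<n. W k * \<rho> k)
     \<le> W 0 * (M - \<rho> 0) - W (n - 1) * (M - \<rho> n)" using Suc by auto
    have "W n \<le> W (n - 1)" using assms(2) Suc.prems False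
      by (metis Suc_diff_1 Suc_le_eq not_gr_zero)
    moreover have "\<rho> n \<le> M" using assms(3) by auto
    ultimately have "(W (n-1) - W n) * (M - \<rho> n) \<ge> 0" by auto
    then show ?thesis using IH by (simp add: algebra_simps)
  qed
qed

lemma tele_up:
  fixes W \<rho> :: "nat \<Rightarrow> real"
  assumes "N \<ge> 1" "\<forall>k<N. 0 \<le> W k" "\<forall>k. Suc k < N \<longrightarrow> W (Suc k) \<le> W k" "\<forall>k. \<rho> k \<le> M"
  shows "(\<Sum>k<N. W k * \<rho> (Suc k)) - (\<Sum>k<N. W k * \<rho> k) \<le> W 0 * (M - \<rho> 0)"
proof -
  have "W (N - 1) * (M - \<rho> N) \<ge> 0" using assms by auto
  then show ?thesis using tele_aux[OF assms(2-4), of N] assms(1) by auto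
qed

lemma tele_lo:
  fixes W \<rho> :: "nat \<Rightarrow> real"
  assumes "N \<ge> 1" "\<forall>k<N. 0 \<le> W k" "\<forall>k. Suc k < N \<longrightarrow> W (Suc k) \<le> W k" "\<forall>k. m \<le> \<rho> k"
  shows "(\<Sum>k<N. W k * \<rho> k) - (\<Sum>k<N. W k * \<rho> (Suc k)) \<le> W 0 * (\<rho> 0 - m)"
  using tele_up[OF assms(1-3), of "\<lambda>k. - \<rho> k" "-m"] assms(4)
  by (simp add: sum_negf)

theorem theorem3p1:
  fixes rho_max eta rho_m rho_M h x0 tau :: real
    and g g' v v' w w' :: "real \<Rightarrow> real"
    and N R :: nat and y \<gamma> :: "nat \<Rightarrow> real"
    and rhobar rhonew :: "int \<Rightarrow> real" and P :: "int \<Rightarrow> real poly"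
  assumes rho_max_pos: "rho_max > 0" and eta_pos: "eta > 0"
    and g_deriv: "\<And>x. x \<in> {0..rho_max} \<Longrightarrow> (g has_real_derivative g' x) (at x within {0..rho_max})"
    and g'_cont: "continuous_on {0..rho_max} g'"
    and g_nonneg: "\<And>x. x \<in> {0..rho_max} \<Longrightarrow> g x \<ge> 0"
    and g'_nonneg: "\<And>x. x \<in> {0..rho_max} \<Longrightarrow> g' x \<ge> 0"
    and v_deriv: "\<And>x. x \<in> {0..rho_max} \<Longrightarrow> (v has_real_derivative v' x) (at x within {0..rho_max})"
    and v'_cont: "continuous_on {0..rho_max} v'"
    and v_nonneg: "\<And>x. x \<in> {0..rho_max} \<Longrightarrow> v x \<ge> 0"
    and v'_nonpos: "\<And>x. x \<in> {0..rho_max} \<Longrightarrow> v' x \<le> 0"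
    and w_deriv: "\<And>x. x \<in> {0..eta} \<Longrightarrow> (w has_real_derivative w' x) (at x within {0..eta})"
    and w'_cont: "continuous_on {0..eta} w'"
    and w_nonneg: "\<And>x. x \<in> {0..eta} \<Longrightarrow> w x \<ge> 0"
    and w'_nonpos: "\<And>x. x \<in> {0..eta} \<Longrightarrow> w' x \<le> 0"
    and w_int: "(w has_integral 1) {0..eta}"
    and rho_bounds: "0 \<le> rho_m" "rho_m \<le> rho_M" "rho_M \<le> rho_max"
    and h_pos: "h > 0" and Nh: "real N * h = eta"
    and y_range: "\<And>\<nu>. \<nu> \<in> {1..R} \<Longrightarrow> y \<nu> \<in> {0..1}"
    and y_R: "y R = 1"
    and \<gamma>_pos: "\<And>\<nu>. \<nu> \<in> {1..R} \<Longrightarrow> \<gamma> \<nu> > 0"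
    and \<gamma>_sum: "(\<Sum>\<nu>=1..R. \<gamma> \<nu>) = 1"
    and w_discrete: "h * (\<Sum>k<N. \<Sum>\<nu>=1..R. \<gamma> \<nu> * w ((real k + y \<nu>) * h)) = 1"
    and rhobar_bounds: "\<And>j. rho_m \<le> rhobar j \<and> rhobar j \<le> rho_M"
    and P_avg: "\<And>l. integral {x0 + real_of_int l * h - h / 2 .. x0 + real_of_int l * h + h / 2}
                        (\<lambda>x. poly (P l) x) / h = rhobar l"
    and P_quad_exact: "\<And>l. integral {x0 + real_of_int l * h - h / 2 .. x0 + real_of_int l * h + h / 2}
                        (\<lambda>x. poly (P l) x) / h = (\<Sum>\<nu>=1..R. \<gamma> \<nu> * recon P x0 h y l \<nu>)"
    and recon_bounds: "\<And>l \<nu>. \<nu> \<in> {1..R} \<Longrightarrow> rho_m \<le> recon P x0 h y l \<nu> \<and> recon P x0 h y l \<nu> \<le> rho_M"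
    and tau_pos: "tau > 0"
    and update: "\<And>j. rhonew j = rhobar j - tau / h *
         (Vface v w P x0 h N R \<gamma> y j * g (poly (P j) (x0 + real_of_int j * h + h / 2))
          - Vface v w P x0 h N R \<gamma> y (j - 1) * g (poly (P (j - 1)) (x0 + real_of_int j * h - h / 2)))"
    and CFL: "tau * (\<gamma> R * h * w 0 * sup_norm_on {0..rho_max} v' * sup_norm_on {0..rho_max} g
                    + sup_norm_on {0..rho_max} v * sup_norm_on {0..rho_max} g') \<le> \<gamma> R * h"
  shows "\<forall>j. rho_m \<le> rhonew j \<and> rhonew j \<le> rho_M"
proof
  fix j :: int
  have R1: "R \<ge> 1" using \<gamma>_sum by (cases R) auto
  have N1: "N \<ge> 1" using w_discrete by (cases N) auto
  define r where "r = recon P x0 h y"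
  define A where "A = (\<lambda>i. h * (\<Sum>k<N. \<Sum>\<nu>=1..R. \<gamma> \<nu> * w ((real k + y \<nu>) * h) * r (i + int k + 1) \<nu>))"
  have VA: "\<And>i. Vface v w P x0 h N R \<gamma> y i = v (A i)" unfolding Vface_def A_def r_def by simp
  define Gn where "Gn = sup_norm_on {0..rho_max} g"
  define G'n where "G'n = sup_norm_on {0..rho_max} g'"
  define Vn where "Vn = sup_norm_on {0..rho_max} v"
  define V'n where "V'n = sup_norm_on {0..rho_max} v'"
  have gc: "continuous_on {0..rho_max} g" by (rule DERIV_continuous_on) (rule g_deriv)
  have vc: "continuous_on {0..rho_max} v" by (rule DERIV_continuous_on) (rule v_deriv)
  have Gb: "\<And>x. x \<in> {0..rho_max} \<Longrightarrow> \<bar>g x\<bar> \<le> Gn" unfolding Gn_def by (rule sup_norm_ge[OF gc])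
  have G'b: "\<And>x. x \<in> {0..rho_max} \<Longrightarrow> \<bar>g' x\<bar> \<le> G'n" unfolding G'n_def by (rule sup_norm_ge[OF g'_cont])
  have Vb: "\<And>x. x \<in> {0..rho_max} \<Longrightarrow> \<bar>v x\<bar> \<le> Vn" unfolding Vn_def by (rule sup_norm_ge[OF vc])
  have V'b: "\<And>x. x \<in> {0..rho_max} \<Longrightarrow> \<bar>v' x\<bar> \<le> V'n" unfolding V'n_def by (rule sup_norm_ge[OF v'_cont])
  have V'n0: "V'n \<ge> 0" using V'b[of 0] rho_max_pos by auto
  have G'n0: "G'n \<ge> 0" using G'b[of 0] rho_max_pos by auto
  have Gn0: "Gn \<ge> 0" using Gb[of 0] rho_max_pos by auto
  have Vn0: "Vn \<ge> 0" using Vb[of 0] rho_max_pos by auto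
  have gmono: "\<And>a b. 0 \<le> a \<Longrightarrow> a \<le> b \<Longrightarrow> b \<le> rho_max \<Longrightarrow> g a \<le> g b"
    using mono_deriv[OF g_deriv g'_nonneg] by blast
  have vmono: "\<And>a b. 0 \<le> a \<Longrightarrow> a \<le> b \<Longrightarrow> b \<le> rho_max \<Longrightarrow> v b \<le> v a"
  proof -
    fix a b :: real assume "0 \<le> a" "a \<le> b" "b \<le> rho_max"
    moreover have "\<And>x. x \<in> {0..rho_max} \<Longrightarrow> ((\<lambda>x. - v x) has_real_derivative - v' x) (at x within {0..rho_max})"
      using v_deriv by (intro DERIV_minus) auto
    ultimately have "- v a \<le> - v b" using mono_deriv[of 0 rho_max "\<lambda>x. - v x" "\<lambda>x. - v' x" a b] v'_nonpos by auto
    then show "v b \<le> v a" by simp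
  qed
  have wmono: "\<And>a b. 0 \<le> a \<Longrightarrow> a \<le> b \<Longrightarrow> b \<le> eta \<Longrightarrow> w b \<le> w a"
  proof -
    fix a b :: real assume "0 \<le> a" "a \<le> b" "b \<le> eta"
    moreover have "\<And>x. x \<in> {0..eta} \<Longrightarrow> ((\<lambda>x. - w x) has_real_derivative - w' x) (at x within {0..eta})"
      using w_deriv by (intro DERIV_minus) auto
    ultimately have "- w a \<le> - w b" using mono_deriv[of 0 eta "\<lambda>x. - w x" "\<lambda>x. - w' x" a b] w'_nonpos by auto
    then show "w b \<le> w a" by simp
  qed
  have glip: "\<And>a b. a \<in> {0..rho_max} \<Longrightarrow> b \<in> {0..rho_max} \<Longrightarrow> \<bar>g a - g b\<bar> \<le> G'n * \<bar>a - b\<bar>"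
    using lip_deriv[OF g_deriv G'b] by blast
  have vlip: "\<And>a b. a \<in> {0..rho_max} \<Longrightarrow> b \<in> {0..rho_max} \<Longrightarrow> \<bar>v a - v b\<bar> \<le> V'n * \<bar>a - b\<bar>"
    using lip_deriv[OF v_deriv V'b] by blast
  have w0: "w 0 \<ge> 0" using w_nonneg[of 0] eta_pos by auto
  have arg_in: "\<And>k \<nu>. k < N \<Longrightarrow> \<nu> \<in> {1..R} \<Longrightarrow> (real k + y \<nu>) * h \<in> {0..eta}"
  proof -
    fix k \<nu> assume k: "k < N" and nu: "\<nu> \<in> {1..R}"
    have "real (Suc k) \<le> real N" using k by (simp only: of_nat_le_iff Suc_le_eq)
    then have "real k + y \<nu> \<le> real N" using y_range[OF nu] by simp
    then have "(real k + y \<nu>) * h \<le> real N * h" using h_pos by (intro mult_right_mono) auto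
    moreover have "0 \<le> (real k + y \<nu>) * h" using y_range[OF nu] h_pos by auto
    ultimately show "(real k + y \<nu>) * h \<in> {0..eta}" using Nh by auto
  qed
  have rbd: "\<And>l \<nu>. \<nu> \<in> {1..R} \<Longrightarrow> rho_m \<le> r l \<nu> \<and> r l \<nu> \<le> rho_M"
    using recon_bounds r_def by auto
  have rhobar_eq: "rhobar j = (\<Sum>\<nu>=1..R. \<gamma> \<nu> * r j \<nu>)"
    using P_avg[of j] P_quad_exact[of j] r_def by simp
  have Aw: "h * (\<Sum>k<N. \<Sum>\<nu>=1..R. \<gamma> \<nu> * w ((real k + y \<nu>) * h) * c) = c" for c
  proof -
    have "h * (\<Sum>k<N. \<Sum>\<nu>=1..R. \<gamma> \<nu> * w ((real k + y \<nu>) * h) * c)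
       = (h * (\<Sum>k<N. \<Sum>\<nu>=1..R. \<gamma> \<nu> * w ((real k + y \<nu>) * h))) * c"
      by (simp add: sum_distrib_right mult.assoc)
    also have "\<dots> = c" using w_discrete by (simp only: mult_1)
    finally show ?thesis .
  qed
  have wt_nn: "\<And>k \<nu>. k < N \<Longrightarrow> \<nu> \<in> {1..R} \<Longrightarrow> 0 \<le> \<gamma> \<nu> * w ((real k + y \<nu>) * h)"
    using arg_in w_nonneg \<gamma>_pos by (meson less_le mult_nonneg_nonneg)
  have Arange: "rho_m \<le> A i \<and> A i \<le> rho_M" for i
  proof
    have "(\<Sum>k<N. \<Sum>\<nu>=1..R. \<gamma> \<nu> * w ((real k + y \<nu>) * h) * rho_m)
        \<le> (\<Sum>k<N. \<Sum>\<nu>=1..R. \<gamma> \<nu> * w ((real k + y \<nu>) * h) * r (i + int k + 1) \<nu>)"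
      using wt_nn rbd by (intro sum_mono mult_left_mono) auto
    then have "h * (\<Sum>k<N. \<Sum>\<nu>=1..R. \<gamma> \<nu> * w ((real k + y \<nu>) * h) * rho_m) \<le> A i"
      unfolding A_def using h_pos by (intro mult_left_mono) auto
    then show "rho_m \<le> A i" using Aw[of rho_m] by simp
    have "(\<Sum>k<N. \<Sum>\<nu>=1..R. \<gamma> \<nu> * w ((real k + y \<nu>) * h) * r (i + int k + 1) \<nu>)
        \<le> (\<Sum>k<N. \<Sum>\<nu>=1..R. \<gamma> \<nu> * w ((real k + y \<nu>) * h) * rho_M)"
      using wt_nn rbd by (intro sum_mono mult_left_mono) auto
    then have "A i \<le> h * (\<Sum>k<N. \<Sum>\<nu>=1..R. \<gamma> \<nu> * w ((real k + y \<nu>) * h) * rho_M)"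
      unfolding A_def using h_pos by (intro mult_left_mono) auto
    then show "A i \<le> rho_M" using Aw[of rho_M] by simp
  qed
  have Ain: "A i \<in> {0..rho_max}" for i using Arange[of i] rho_bounds by auto
  define W where "W = (\<lambda>\<nu> k. \<gamma> \<nu> * w ((real k + y \<nu>) * h))"
  define \<rho> where "\<rho> = (\<lambda>\<nu> k. r (j + int k) \<nu>)"
  have Aj: "A j = h * (\<Sum>\<nu>=1..R. \<Sum>k<N. W \<nu> k * \<rho> \<nu> (Suc k))"
    unfolding A_def W_def \<rho>_def by (subst sum.swap) (simp add: ac_simps)
  have Aj1: "A (j - 1) = h * (\<Sum>\<nu>=1..R. \<Sum>k<N. W \<nu> k * \<rho> \<nu> k)"
    unfolding A_def W_def \<rho>_def by (subst sum.swap) (simp add: mult.assoc)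
  have Wp: "\<And>\<nu>. \<nu> \<in> {1..R} \<Longrightarrow> \<forall>k<N. 0 \<le> W \<nu> k" using wt_nn W_def by auto
  have Wd: "\<And>\<nu>. \<nu> \<in> {1..R} \<Longrightarrow> \<forall>k. Suc k < N \<longrightarrow> W \<nu> (Suc k) \<le> W \<nu> k"
  proof (intro allI impI)
    fix \<nu> k assume nu: "\<nu> \<in> {1..R}" and k: "Suc k < N"
    have "w ((real (Suc k) + y \<nu>) * h) \<le> w ((real k + y \<nu>) * h)"
      using arg_in[OF k nu] arg_in[of k \<nu>] k nu h_pos by (intro wmono) auto
    then show "W \<nu> (Suc k) \<le> W \<nu> k" unfolding W_def using \<gamma>_pos[OF nu]
      by (intro mult_left_mono) auto
  qed
  have W0: "\<And>\<nu>. \<nu> \<in> {1..R} \<Longrightarrow> W \<nu> 0 \<le> \<gamma> \<nu> * w 0"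
  proof -
    fix \<nu> assume nu: "\<nu> \<in> {1..R}"
    have "w ((real 0 + y \<nu>) * h) \<le> w 0" using arg_in[of 0 \<nu>] N1 nu by (intro wmono) auto
    then show "W \<nu> 0 \<le> \<gamma> \<nu> * w 0" unfolding W_def using \<gamma>_pos[OF nu]
      by (intro mult_left_mono) auto
  qed
  define Dup where "Dup = (\<Sum>\<nu>=1..R. \<gamma> \<nu> * (rho_M - r j \<nu>))"
  define Dlo where "Dlo = (\<Sum>\<nu>=1..R. \<gamma> \<nu> * (r j \<nu> - rho_m))"
  have tnn1: "\<And>\<nu>. \<nu> \<in> {1..R} \<Longrightarrow> 0 \<le> \<gamma> \<nu> * (rho_M - r j \<nu>)"
    using rbd \<gamma>_pos by (simp add: less_imp_le)
  have tnn2: "\<And>\<nu>. \<nu> \<in> {1..R} \<Longrightarrow> 0 \<le> \<gamma> \<nu> * (r j \<nu> - rho_m)"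
    using rbd \<gamma>_pos by (simp add: less_imp_le)
  have Dup0: "Dup \<ge> \<gamma> R * (rho_M - r j R)"
  proof -
    have "\<gamma> R * (rho_M - r j R) = (\<Sum>\<nu>\<in>{R}. \<gamma> \<nu> * (rho_M - r j \<nu>))" by simp
    also have "\<dots> \<le> Dup" unfolding Dup_def using R1 tnn1
      by (intro sum_mono2) auto
    finally show ?thesis .
  qed
  have Dlo0: "Dlo \<ge> \<gamma> R * (r j R - rho_m)"
  proof -
    have "\<gamma> R * (r j R - rho_m) = (\<Sum>\<nu>\<in>{R}. \<gamma> \<nu> * (r j \<nu> - rho_m))" by simp
    also have "\<dots> \<le> Dlo" unfolding Dlo_def using R1 tnn2
      by (intro sum_mono2) auto
    finally show ?thesis .
  qed
  have dR: "rho_m \<le> r j R" "r j R \<le> rho_M" using rbd[of R] R1 by auto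
  have gR0: "\<gamma> R > 0" using \<gamma>_pos R1 by auto
  have Dup_nn: "Dup \<ge> 0" using Dup0 dR gR0 mult_nonneg_nonneg[of "\<gamma> R" "rho_M - r j R"] by linarith
  have Dlo_nn: "Dlo \<ge> 0" using Dlo0 dR gR0 mult_nonneg_nonneg[of "\<gamma> R" "r j R - rho_m"] by linarith
  have Adiff_up: "A j - A (j - 1) \<le> h * w 0 * Dup"
  proof -
    have "A j - A (j - 1) = h * (\<Sum>\<nu>=1..R. (\<Sum>k<N. W \<nu> k * \<rho> \<nu> (Suc k)) - (\<Sum>k<N. W \<nu> k * \<rho> \<nu> k))"
      unfolding Aj Aj1 by (simp add: sum_subtractf right_diff_distrib)
    also have "\<dots> \<le> h * (\<Sum>\<nu>=1..R. \<gamma> \<nu> * w 0 * (rho_M - r j \<nu>))"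
    proof (intro mult_left_mono sum_mono)
      fix \<nu> assume nu: "\<nu> \<in> {1..R}"
      have "(\<Sum>k<N. W \<nu> k * \<rho> \<nu> (Suc k)) - (\<Sum>k<N. W \<nu> k * \<rho> \<nu> k) \<le> W \<nu> 0 * (rho_M - \<rho> \<nu> 0)"
        using tele_up[OF N1 Wp[OF nu] Wd[OF nu], of "\<rho> \<nu>" rho_M] rbd[OF nu] unfolding \<rho>_def by blast
      also have "\<dots> \<le> \<gamma> \<nu> * w 0 * (rho_M - r j \<nu>)"
        using W0[OF nu] rbd[OF nu] \<rho>_def by (auto intro: mult_right_mono)
      finally show "(\<Sum>k<N. W \<nu> k * \<rho> \<nu> (Suc k)) - (\<Sum>k<N. W \<nu> k * \<rho> \<nu> k) \<le> \<gamma> \<nu> * w 0 * (rho_M - r j \<nu>)" .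
    qed (use h_pos in auto)
    also have "\<dots> = h * w 0 * Dup" unfolding Dup_def by (simp add: sum_distrib_left algebra_simps)
    finally show ?thesis .
  qed
  have Adiff_lo: "A (j - 1) - A j \<le> h * w 0 * Dlo"
  proof -
    have "A (j - 1) - A j = h * (\<Sum>\<nu>=1..R. (\<Sum>k<N. W \<nu> k * \<rho> \<nu> k) - (\<Sum>k<N. W \<nu> k * \<rho> \<nu> (Suc k)))"
      unfolding Aj Aj1 by (simp add: sum_subtractf right_diff_distrib)
    also have "\<dots> \<le> h * (\<Sum>\<nu>=1..R. \<gamma> \<nu> * w 0 * (r j \<nu> - rho_m))"
    proof (intro mult_left_mono sum_mono)
      fix \<nu> assume nu: "\<nu> \<in> {1..R}"
      have "(\<Sum>k<N. W \<nu> k * \<rho> \<nu> k) - (\<Sum>k<N. W \<nu> k * \<rho> \<nu> (Suc k)) \<le> W \<nu> 0 * (\<rho> \<nu> 0 - rho_m)"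
        using tele_lo[OF N1 Wp[OF nu] Wd[OF nu], of rho_m "\<rho> \<nu>"] rbd[OF nu] unfolding \<rho>_def by blast
      also have "\<dots> \<le> \<gamma> \<nu> * w 0 * (r j \<nu> - rho_m)"
        using W0[OF nu] rbd[OF nu] \<rho>_def by (auto intro: mult_right_mono)
      finally show "(\<Sum>k<N. W \<nu> k * \<rho> \<nu> k) - (\<Sum>k<N. W \<nu> k * \<rho> \<nu> (Suc k)) \<le> \<gamma> \<nu> * w 0 * (r j \<nu> - rho_m)" .
    qed (use h_pos in auto)
    also have "\<dots> = h * w 0 * Dlo" unfolding Dlo_def by (simp add: sum_distrib_left algebra_simps)
    finally show ?thesis .
  qed
  define Vp where "Vp = v (A j)"
  define Vm where "Vm = v (A (j - 1))"
  have VmVp: "Vm - Vp \<le> V'n * (h * w 0 * Dup)"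
  proof (cases "A j \<le> A (j - 1)")
    case True
    then have "Vm \<le> Vp" unfolding Vm_def Vp_def using Ain[of j] Ain[of "j-1"] by (intro vmono) auto
    moreover have "0 \<le> V'n * (h * w 0 * Dup)" using V'n0 h_pos w0 Dup_nn by auto
    ultimately show ?thesis by linarith
  next
    case False
    have "Vm - Vp \<le> V'n * \<bar>A (j - 1) - A j\<bar>" unfolding Vm_def Vp_def
      using vlip[OF Ain Ain, of "j - 1" j] by linarith
    also have "\<dots> \<le> V'n * (h * w 0 * Dup)" using False Adiff_up V'n0
      by (intro mult_left_mono) auto
    finally show ?thesis .
  qed
  have VpVm: "Vp - Vm \<le> V'n * (h * w 0 * Dlo)"
  proof (cases "A (j - 1) \<le> A j")
    case True
    then have "Vp \<le> Vm" unfolding Vm_def Vp_def using Ain[of j] Ain[of "j-1"] by (intro vmono) auto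
    moreover have "0 \<le> V'n * (h * w 0 * Dlo)" using V'n0 h_pos w0 Dlo_nn by auto
    ultimately show ?thesis by linarith
  next
    case False
    have "Vp - Vm \<le> V'n * \<bar>A (j - 1) - A j\<bar>" unfolding Vm_def Vp_def
      using vlip[OF Ain Ain, of "j - 1" j] by linarith
    also have "\<dots> \<le> V'n * (h * w 0 * Dlo)" using False Adiff_lo V'n0
      by (intro mult_left_mono) auto
    finally show ?thesis .
  qed
  have Vpb: "0 \<le> Vp" "Vp \<le> Vn" using Vb[OF Ain[of j]] v_nonneg[OF Ain[of j]] Vp_def by auto
  have Vmb: "0 \<le> Vm" "Vm \<le> Vn" using Vb[OF Ain[of "j-1"]] v_nonneg[OF Ain[of "j-1"]] Vm_def by auto
  define gR where "gR = g (r j R)"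
  define gL where "gL = g (r (j - 1) R)"
  have rL: "rho_m \<le> r (j - 1) R" "r (j - 1) R \<le> rho_M" using rbd[of R] R1 by auto
  have upd: "rhonew j = rhobar j - tau / h * (Vp * gR - Vm * gL)"
  proof -
    have e1: "poly (P j) (x0 + real_of_int j * h + h / 2) = r j R"
      unfolding r_def recon_def using y_R by (simp add: algebra_simps)
    have e2: "poly (P (j - 1)) (x0 + real_of_int j * h - h / 2) = r (j - 1) R"
      unfolding r_def recon_def using y_R by (simp add: algebra_simps)
    show ?thesis using update[of j] unfolding VA e1 e2 Vp_def Vm_def gR_def gL_def .
  qed
  have gRb: "0 \<le> gR" "gR \<le> Gn" using Gb[of "r j R"] g_nonneg[of "r j R"] dR rho_bounds gR_def by auto
  have gLup: "gL \<le> g rho_M" unfolding gL_def using rL rho_bounds by (intro gmono) auto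
  have gLlo: "g rho_m \<le> gL" unfolding gL_def using rL rho_bounds by (intro gmono) auto
  have gMR: "g rho_M - gR \<le> G'n * (rho_M - r j R)"
    using glip[of rho_M "r j R"] dR rho_bounds gR_def by auto
  have gRm: "gR - g rho_m \<le> G'n * (r j R - rho_m)"
    using glip[of "r j R" rho_m] dR rho_bounds gR_def by auto
  have gm0: "0 \<le> g rho_m" "g rho_m \<le> Gn" using Gb[of rho_m] g_nonneg[of rho_m] rho_bounds by auto
  have gM0: "gR \<le> g rho_M" unfolding gR_def using dR rho_bounds by (intro gmono) auto
  define c1 where "c1 = tau * Vn * G'n / h"
  define c2 where "c2 = tau * Gn * V'n * w 0"
  have cfl: "c2 * \<gamma> R + c1 \<le> \<gamma> R"
  proof -
    have "tau * (\<gamma> R * h * w 0 * V'n * Gn + Vn * G'n) \<le> \<gamma> R * h"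
      using CFL unfolding Gn_def G'n_def Vn_def V'n_def .
    then have "(c2 * \<gamma> R + c1) * h \<le> \<gamma> R * h" unfolding c1_def c2_def using h_pos
      by (simp add: algebra_simps)
    then show ?thesis using h_pos by simp
  qed
  have c1_0: "c1 \<ge> 0" unfolding c1_def using tau_pos Vn0 G'n0 h_pos by auto
  have c2_1: "c2 \<le> 1"
  proof -
    have "c2 * \<gamma> R \<le> 1 * \<gamma> R" using cfl c1_0 by linarith
    then show ?thesis using gR0 by (rule mult_right_le_imp_le)
  qed
  have sumg: "(\<Sum>\<nu>=1..R. \<gamma> \<nu> * c) = c" for c using \<gamma>_sum by (simp add: sum_distrib_right[symmetric])
  show "rho_m \<le> rhonew j \<and> rhonew j \<le> rho_M"
  proof
    have "Vp * gR - Vm * gL \<ge> - (Vm * (g rho_M - gR) + gR * (Vm - Vp))"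
      using mult_left_mono[OF gLup Vmb(1)] by (simp add: algebra_simps)
    moreover have "Vm * (g rho_M - gR) \<le> Vn * (G'n * (rho_M - r j R))"
      using Vmb gMR gM0 by (intro mult_mono) auto
    moreover have "gR * (Vm - Vp) \<le> Gn * (V'n * (h * w 0 * Dup))"
    proof (cases "Vm - Vp \<le> 0")
      case True
      then have "gR * (Vm - Vp) \<le> 0" using gRb by (simp add: mult_nonneg_nonpos)
      then show ?thesis using Gn0 V'n0 h_pos w0 Dup_nn by (simp add: order_trans[OF _ mult_nonneg_nonneg])
    qed (use gRb VmVp in \<open>auto intro: mult_mono\<close>)
    ultimately have "Vp * gR - Vm * gL \<ge> - (Vn * (G'n * (rho_M - r j R)) + Gn * (V'n * (h * w 0 * Dup)))"
      by linarith
    then have "tau / h * (Vp * gR - Vm * gL) \<ge> tau / h * - (Vn * (G'n * (rho_M - r j R)) + Gn * (V'n * (h * w 0 * Dup)))"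
      using tau_pos h_pos by (intro mult_left_mono) auto
    also have "tau / h * - (Vn * (G'n * (rho_M - r j R)) + Gn * (V'n * (h * w 0 * Dup)))
       = - (c1 * (rho_M - r j R) + c2 * Dup)" unfolding c1_def c2_def using h_pos by (simp add: field_simps)
    finally have T: "tau / h * (Vp * gR - Vm * gL) \<ge> - (c1 * (rho_M - r j R) + c2 * Dup)" .
    have Deq: "rho_M - rhobar j = Dup" unfolding rhobar_eq Dup_def
      using sumg[of rho_M] by (simp add: right_diff_distrib sum_subtractf)
    have "(1 - c2) * (Dup - \<gamma> R * (rho_M - r j R)) \<ge> 0" using c2_1 Dup0 by auto
    moreover have "(\<gamma> R - c2 * \<gamma> R - c1) * (rho_M - r j R) \<ge> 0" using cfl dR by auto
    ultimately have "Dup - c1 * (rho_M - r j R) - c2 * Dup \<ge> 0" by (simp add: algebra_simps)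
    then show "rhonew j \<le> rho_M" using upd T Deq by linarith
  next
    have "Vp * gR - Vm * gL \<le> Vp * (gR - g rho_m) + g rho_m * (Vp - Vm)"
      using mult_left_mono[OF gLlo Vmb(1)] by (simp add: algebra_simps)
    moreover have "Vp * (gR - g rho_m) \<le> Vn * (G'n * (r j R - rho_m))"
      using Vpb gRm dR rho_bounds by (intro mult_mono) (auto simp: gR_def intro!: gmono)
    moreover have "g rho_m * (Vp - Vm) \<le> Gn * (V'n * (h * w 0 * Dlo))"
    proof (cases "Vp - Vm \<le> 0")
      case True
      then have "g rho_m * (Vp - Vm) \<le> 0" using gm0 by (simp add: mult_nonneg_nonpos)
      then show ?thesis using Gn0 V'n0 h_pos w0 Dlo_nn by (simp add: order_trans[OF _ mult_nonneg_nonneg])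
    qed (use gm0 VpVm in \<open>auto intro: mult_mono\<close>)
    ultimately have "Vp * gR - Vm * gL \<le> Vn * (G'n * (r j R - rho_m)) + Gn * (V'n * (h * w 0 * Dlo))"
      by linarith
    then have "tau / h * (Vp * gR - Vm * gL) \<le> tau / h * (Vn * (G'n * (r j R - rho_m)) + Gn * (V'n * (h * w 0 * Dlo)))"
      using tau_pos h_pos by (intro mult_left_mono) auto
    also have "tau / h * (Vn * (G'n * (r j R - rho_m)) + Gn * (V'n * (h * w 0 * Dlo)))
       = c1 * (r j R - rho_m) + c2 * Dlo" unfolding c1_def c2_def using h_pos by (simp add: field_simps)
    finally have T: "tau / h * (Vp * gR - Vm * gL) \<le> c1 * (r j R - rho_m) + c2 * Dlo" .
    have Deq: "rhobar j - rho_m = Dlo" unfolding rhobar_eq Dlo_def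
      using sumg[of rho_m] by (simp add: right_diff_distrib sum_subtractf)
    have "(1 - c2) * (Dlo - \<gamma> R * (r j R - rho_m)) \<ge> 0" using c2_1 Dlo0 by auto
    moreover have "(\<gamma> R - c2 * \<gamma> R - c1) * (r j R - rho_m) \<ge> 0" using cfl dR by auto
    ultimately have "Dlo - c1 * (r j R - rho_m) - c2 * Dlo \<ge> 0" by (simp add: algebra_simps)
    then show "rho_m \<le> rhonew j" using upd T Deq by linarith
  qed
qed

end
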